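(* Let $\phi:\mathbb{R}^n\to\mathbb{R}$ be a twice continuously differentiable $\mu$-strongly convex function ($\mu>0$) which attains its minimum value $\phi^*$ at $x^*\in\mathbb{R}^n$, and assume $\nabla\phi$ is $L$-Lipschitz continuous. Fix $\alpha,\beta>0$ and $\lambda\in[0,1]$ with $\lambda\le \frac{1}{2\alpha}$. Then there exist constants $C\ge 0$ and $\kappa>0$ such that, for every $z_0\in\mathbb{R}^n$ and every $t>0$, the $\lambda$-extended speed restarted trajectory $\boldsymbol{x}_{z_0}$ starting from $z_0$ is defined on $[0,\infty)$ and satisfies $$\phi(\boldsymbol{x}_{z_0}(t))-\phi^*\le C e^{-\kappa t}\big(\phi(z_0)-\phi^*\big).$$
   Context: For $z\in\mathbb{R}^n$, $x_z\in C^2((0,\infty);\mathbb{R}^n)\cap C^1([0,\infty);\mathbb{R}^n)$ denotes the unique function with $x_z(0)=z$, $\dot x_z(0)=0$ satisfying, for all $t>0$, $$\ddot x(t)+\frac{\alpha}{t}\dot x(t)+\beta\nabla^2\phi(x(t))\dot x(t)+\nabla\phi(x(t))=0 \qquad\text{(DIN-AVD)}.$$ For $z\notin\operatorname{argmin}\phi$, $t>0$ and $\lambda\in[0,1]$ set $\varphi_{z,\lambda}(t)=\frac12\frac{d}{dt}\|\dot x_z(t)\|^2+\lambda\frac{\alpha}{t}\|\dot x_z(t)\|^2$, and define the $\lambda$-extended speed restarting time $T^\lambda(z)=\inf\{t>0:\varphi_{z,\lambda}(t)\le 0\}$. The restarted trajectory $\boldsymbol{x}_{z_0}:[0,\infty)\to\mathbb{R}^n$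 is defined inductively: $T_1=T^\lambda(z_0)$, $\boldsymbol{x}_{z_0}(t)=x_{z_0}(t)$ for $t\in[0,T_1]$, $z_1=\boldsymbol{x}_{z_0}(T_1)$; and for $k\ge1$, $T_{k+1}=T_k+T^\lambda(z_k)$, $\boldsymbol{x}_{z_0}(t)=x_{z_k}(t-T_k)$ for $t\in[T_k,T_{k+1}]$, $z_{k+1}=\boldsymbol{x}_{z_0}(T_{k+1})$ (if some $z_k$ is a minimizer, the trajectory stays constant from then on). *)

theory Defs
  imports "HOL-Analysis.Analysis"
begin

definition strongly_convex_on :: "real \<Rightarrow> 'a::real_inner set \<Rightarrow> ('a \<Rightarrow> real) \<Rightarrow> bool" where
  "strongly_convex_on \<mu> S \<phi> \<longleftrightarrow> convex_on S (\<lambda>x. \<phi> x - \<mu> / 2 * (norm x)\<^sup>2)"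

text \<open>x is a solution of (DIN-AVD) with x(0) = z, x'(0) = 0, where g is the gradient
  and H the Hessian of phi; x is C^1 on [0,inf) and C^2 on (0,inf).\<close>
definition DIN_sol ::
  "real \<Rightarrow> real \<Rightarrow> ('a::euclidean_space \<Rightarrow> 'a) \<Rightarrow> ('a \<Rightarrow> 'a \<Rightarrow>\<^sub>L 'a) \<Rightarrow> 'a \<Rightarrow> (real \<Rightarrow> 'a) \<Rightarrow> bool" where
  "DIN_sol \<alpha> \<beta> g H z x \<longleftrightarrow>
     x 0 = z \<and>
     (\<exists>x' x''.
        (\<forall>t\<ge>0. (x has_vector_derivative x' t) (at t within {0..})) \<and>
        continuous_on {0..} x' \<and> x' 0 = 0 \<and>
        (\<forall>t>0. (x' has_vector_derivative x'' t) (at t)) \<and>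
        continuous_on {0<..} x'' \<and>
        (\<forall>t>0. x'' t + (\<alpha> / t) *\<^sub>R x' t + \<beta> *\<^sub>R blinfun_apply (H (x t)) (x' t) + g (x t) = 0))"

definition restart_fun :: "(real \<Rightarrow> 'a::real_normed_vector) \<Rightarrow> real \<Rightarrow> real \<Rightarrow> real \<Rightarrow> real" where
  "restart_fun x \<alpha> lam t =
     1/2 * deriv (\<lambda>s. (norm (vector_derivative x (at s)))\<^sup>2) t
     + lam * (\<alpha> / t) * (norm (vector_derivative x (at t)))\<^sup>2"

text \<open>Restarting time T^lambda(z) as an extended real; it is +infinity if z is a minimizer
  (the trajectory then stays constant) or if the set is empty (inf of the empty set).\<close>
definition restart_time ::
  "('a \<Rightarrow> real) \<Rightarrow> ('a \<Rightarrow> real \<Rightarrow> 'a::real_normed_vector) \<Rightarrow> real \<Rightarrow> real \<Rightarrow> 'a \<Rightarrow> ereal" where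
  "restart_time \<phi> xs \<alpha> lam z =
     (if (\<forall>y. \<phi> z \<le> \<phi> y) then \<infinity>
      else Inf (ereal ` {t. t > 0 \<and> restart_fun (xs z) \<alpha> lam t \<le> 0}))"

fun restart_seq ::
  "('a \<Rightarrow> real) \<Rightarrow> ('a \<Rightarrow> real \<Rightarrow> 'a::real_normed_vector) \<Rightarrow> real \<Rightarrow> real \<Rightarrow> 'a \<Rightarrow> nat \<Rightarrow> 'a \<times> ereal" where
  "restart_seq \<phi> xs \<alpha> lam z0 0 = (z0, 0)"
| "restart_seq \<phi> xs \<alpha> lam z0 (Suc k) =
     (let (z, T) = restart_seq \<phi> xs \<alpha> lam z0 k;
          \<tau> = restart_time \<phi> xs \<alpha> lam z
      in (if \<tau> = \<infinity> then z else xs z (real_of_ereal \<tau>), T + \<tau>))"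

definition restart_point where "restart_point \<phi> xs \<alpha> lam z0 k = fst (restart_seq \<phi> xs \<alpha> lam z0 k)"
definition restart_T where "restart_T \<phi> xs \<alpha> lam z0 k = snd (restart_seq \<phi> xs \<alpha> lam z0 k)"

text \<open>Restarted trajectory: on [T_k, T_{k+1}) it equals x_{z_k}(t - T_k).
  It is meaningful at t exactly when t < T_k for some k.\<close>
definition restarted_traj ::
  "('a \<Rightarrow> real) \<Rightarrow> ('a \<Rightarrow> real \<Rightarrow> 'a::real_normed_vector) \<Rightarrow> real \<Rightarrow> real \<Rightarrow> 'a \<Rightarrow> real \<Rightarrow> 'a" where
  "restarted_traj \<phi> xs \<alpha> lam z0 t =
     (let k = (LEAST k. ereal t < restart_T \<phi> xs \<alpha> lam z0 (Suc k))
      in xs (restart_point \<phi> xs \<alpha> lam z0 k) (t - real_of_ereal (restart_T \<phi> xs \<alpha> lam z0 k)))"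

end

theory Submission
  imports Defs
begin
locale din =
  fixes \<phi> :: "'a::euclidean_space \<Rightarrow> real"
    and g :: "'a \<Rightarrow> 'a"
    and H :: "'a \<Rightarrow> 'a \<Rightarrow>\<^sub>L 'a"
    and xs :: "'a \<Rightarrow> real \<Rightarrow> 'a"
    and \<mu> L \<alpha> \<beta> lam :: real and xstar :: 'a
  assumes grad: "\<And>x. (\<phi> has_derivative (\<lambda>h. g x \<bullet> h)) (at x)"
    and hess: "\<And>x. (g has_derivative blinfun_apply (H x)) (at x)"
    and mu_pos: "\<mu> > 0"
    and strongly_convex: "strongly_convex_on \<mu> UNIV \<phi>"
    and minimizer: "\<And>x. \<phi> xstar \<le> \<phi> x"
    and lipschitz: "L-lipschitz_on UNIV g"
    and alpha_pos: "\<alpha> > 0" and beta_pos: "\<beta> > 0"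
    and lam0: "0 \<le> lam" and lam1: "lam \<le> 1" and lam2: "lam \<le> 1 / (2 * \<alpha>)"
    and sol: "\<And>z. DIN_sol \<alpha> \<beta> g H z (xs z)"
begin

lemma tangent: "\<phi> y \<ge> \<phi> x + g x \<bullet> (y - x) + \<mu> / 2 * (norm (y - x))\<^sup>2"
proof -
  define \<psi> where "\<psi> = (\<lambda>x. \<phi> x - \<mu> / 2 * (norm x)\<^sup>2)"
  have cvx: "convex_on UNIV \<psi>" using strongly_convex unfolding strongly_convex_on_def \<psi>_def .
  define f where "f = (\<lambda>s::real. \<psi> (x + s *\<^sub>R (y - x)))"
  have cf: "convex_on UNIV f"
  proof (rule convex_onI)
    fix s1 s2 u :: real assume u: "0 < u" "u < 1"
    have "f ((1 - u) * s1 + u * s2) = \<psi> ((1 - u) *\<^sub>R (x + s1 *\<^sub>R (y - x)) + u *\<^sub>R (x + s2 *\<^sub>R (y - x)))"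
      unfolding f_def by (simp add: algebra_simps)
    also have "\<dots> \<le> (1 - u) * \<psi> (x + s1 *\<^sub>R (y - x)) + u * \<psi> (x + s2 *\<^sub>R (y - x))"
      using convex_onD[OF cvx, of u] u by simp
    finally show "f ((1 - u) *\<^sub>R s1 + u *\<^sub>R s2) \<le> (1 - u) * f s1 + u * f s2" unfolding f_def by simp
  qed auto
  have dpsi: "(\<psi> has_derivative (\<lambda>h. g x \<bullet> h - \<mu> * (x \<bullet> h))) (at p)" if "p = x" for p
    unfolding \<psi>_def that
    by (auto intro!: derivative_eq_intros grad simp: power2_norm_eq_inner algebra_simps inner_commute)
  have "(f has_derivative (\<lambda>h. g x \<bullet> (h *\<^sub>R (y - x)) - \<mu> * (x \<bullet> (h *\<^sub>R (y - x))))) (at 0)"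
    unfolding f_def
    by (rule has_derivative_compose[of "\<lambda>s. x + s *\<^sub>R (y - x)" _ _ _ \<psi>, unfolded o_def])
       (auto intro!: derivative_eq_intros dpsi)
  then have "(f has_derivative (\<lambda>h. (g x \<bullet> (y - x) - \<mu> * (x \<bullet> (y - x))) * h)) (at 0)"
    by (rule has_derivative_eq_rhs) (simp add: fun_eq_iff algebra_simps inner_diff_right)
  then have "(f has_field_derivative (g x \<bullet> (y - x) - \<mu> * (x \<bullet> (y - x)))) (at 0 within UNIV)"
    by (simp add: has_field_derivative_def)
  from convex_on_imp_above_tangent[OF cf _ _ _ this, of 1]
  have "f 1 - f 0 \<ge> g x \<bullet> (y - x) - \<mu> * (x \<bullet> (y - x))" by simp
  then have "\<phi> y - \<mu>/2 * (y \<bullet> y) - \<phi> x + \<mu>/2 * (x \<bullet> x) \<ge> g x \<bullet> (y - x) - \<mu> * (x \<bullet> (y - x))"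
    by (simp add: f_def \<psi>_def power2_norm_eq_inner)
  moreover have nrm: "(norm (y - x))\<^sup>2 = y \<bullet> y - 2 * (x \<bullet> y) + x \<bullet> x"
    by (simp add: power2_norm_eq_inner algebra_simps inner_commute)
  have "\<mu> / 2 * (norm (y - x))\<^sup>2 = \<mu> / 2 * (y \<bullet> y) - \<mu> * (x \<bullet> y) + \<mu> / 2 * (x \<bullet> x)"
    unfolding nrm by (simp add: algebra_simps)
  ultimately show ?thesis by (simp add: inner_diff_right algebra_simps inner_commute)
qed

lemma monotone_g: "(g y - g x) \<bullet> (y - x) \<ge> \<mu> * (norm (y - x))\<^sup>2"
proof -
  have "\<phi> y \<ge> \<phi> x + g x \<bullet> (y - x) + \<mu> / 2 * (norm (y - x))\<^sup>2" by (rule tangent)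
  moreover have "\<phi> x \<ge> \<phi> y + g y \<bullet> (x - y) + \<mu> / 2 * (norm (x - y))\<^sup>2" by (rule tangent)
  moreover have "norm (x - y) = norm (y - x)" by (simp add: norm_minus_commute)
  moreover have "g y \<bullet> (x - y) = - (g y \<bullet> (y - x))" by (simp add: inner_diff_right)
  ultimately show ?thesis by (simp add: inner_diff_left)
qed

lemma grad_bound: "(norm (g z))\<^sup>2 \<ge> 2 * \<mu> * (\<phi> z - \<phi> xstar)"
proof -
  define d where "d = xstar - z"
  have "\<phi> xstar \<ge> \<phi> z + g z \<bullet> d + \<mu> / 2 * (norm d)\<^sup>2" unfolding d_def by (rule tangent)
  then have h1: "\<phi> xstar - \<phi> z \<ge> g z \<bullet> d + \<mu> / 2 * (norm d)\<^sup>2" by linarith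
  have h2: "2 * \<mu> * (\<phi> xstar - \<phi> z) \<ge> 2 * \<mu> * (g z \<bullet> d + \<mu> / 2 * (norm d)\<^sup>2)"
    by (rule mult_left_mono) (use h1 mu_pos in auto)
  have h3: "2 * \<mu> * (g z \<bullet> d + \<mu> / 2 * (norm d)\<^sup>2) = 2 * \<mu> * (g z \<bullet> d) + \<mu>\<^sup>2 * (norm d)\<^sup>2"
    by (simp add: algebra_simps power2_eq_square)
  have eq: "(norm (g z + \<mu> *\<^sub>R d))\<^sup>2 = (norm (g z))\<^sup>2 + 2 * \<mu> * (g z \<bullet> d) + \<mu>\<^sup>2 * (norm d)\<^sup>2"
    unfolding power2_norm_eq_inner by (simp add: inner_add_left inner_add_right algebra_simps power2_eq_square inner_commute)
  have h4: "0 \<le> (norm (g z))\<^sup>2 + 2 * \<mu> * (g z \<bullet> d) + \<mu>\<^sup>2 * (norm d)\<^sup>2"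
    by (metis eq zero_le_power2)
  have h5: "2 * \<mu> * (\<phi> z - \<phi> xstar) = - (2 * \<mu> * (\<phi> xstar - \<phi> z))" by (simp add: algebra_simps)
  show ?thesis using h2 h3 h4 h5 by linarith
qed

lemma line_deriv: "((\<lambda>s. g (x + s *\<^sub>R h) \<bullet> w) has_real_derivative (blinfun_apply (H x) h \<bullet> w)) (at 0)"
proof -
  have hx: "(g has_derivative blinfun_apply (H x)) (at (x + 0 *\<^sub>R h))" using hess by simp
  have "((\<lambda>s. x + s *\<^sub>R h) has_derivative (\<lambda>s. s *\<^sub>R h)) (at 0)"
    by (auto intro!: derivative_eq_intros)
  from has_derivative_compose[OF this hx]
  have "((\<lambda>s. g (x + s *\<^sub>R h)) has_derivative (\<lambda>s. blinfun_apply (H x) (s *\<^sub>R h))) (at 0)" .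
  then have "((\<lambda>s. g (x + s *\<^sub>R h) \<bullet> w) has_derivative (\<lambda>s. blinfun_apply (H x) (s *\<^sub>R h) \<bullet> w)) (at 0)"
    by (auto intro!: derivative_eq_intros)
  then show ?thesis
    by (simp add: has_field_derivative_def blinfun.scaleR_right mult.commute[of _ "blinfun_apply (H x) h \<bullet> w"])
qed

lemma hess_lower: "blinfun_apply (H x) h \<bullet> h \<ge> \<mu> * (norm h)\<^sup>2"
proof (rule ccontr)
  assume "\<not> ?thesis"
  define q where "q = (\<lambda>s. g (x + s *\<^sub>R h) \<bullet> h - \<mu> * s * (norm h)\<^sup>2)"
  have "(q has_real_derivative (blinfun_apply (H x) h \<bullet> h - \<mu> * (norm h)\<^sup>2)) (at 0)"
    unfolding q_def by (auto intro!: derivative_eq_intros line_deriv)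
  from DERIV_neg_dec_right[OF this] \<open>\<not> ?thesis\<close>
  obtain d where d: "d > 0" "\<And>s. s > 0 \<Longrightarrow> s < d \<Longrightarrow> q 0 > q (0 + s)" by force
  define s where "s = d / 2"
  have s: "s > 0" "s < d" using d by (auto simp: s_def)
  have "(g (x + s *\<^sub>R h) - g x) \<bullet> ((x + s *\<^sub>R h) - x) \<ge> \<mu> * (norm ((x + s *\<^sub>R h) - x))\<^sup>2"
    by (rule monotone_g)
  then have "s * ((g (x + s *\<^sub>R h) - g x) \<bullet> h) \<ge> s * (\<mu> * s * (norm h)\<^sup>2)"
    using s by (simp add: power2_eq_square algebra_simps)
  then have "(g (x + s *\<^sub>R h) - g x) \<bullet> h \<ge> \<mu> * s * (norm h)\<^sup>2"
    using s by simp
  then have "q s \<ge> q 0" by (simp add: q_def inner_diff_left)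
  with d(2)[OF s] show False by simp
qed

lemma L_nonneg: "\<mu> \<le> L"
proof -
  obtain e :: 'a where e: "e \<in> Basis" using nonempty_Basis by blast
  have ne: "norm e = 1" using e by simp
  have "\<mu> * (norm ((xstar + e) - xstar))\<^sup>2 \<le> (g (xstar + e) - g xstar) \<bullet> ((xstar + e) - xstar)"
    by (rule monotone_g)
  also have "\<dots> \<le> norm (g (xstar + e) - g xstar) * norm e" using norm_cauchy_schwarz by simp
  also have "\<dots> = dist (g (xstar + e)) (g xstar)" using ne by (simp add: dist_norm)
  also have "\<dots> \<le> L * dist (xstar + e) xstar" using lipschitz by (auto simp: lipschitz_on_def)
  finally show ?thesis using ne by (simp add: dist_norm)
qed

lemma hess_upper: "norm (blinfun_apply (H x) h) \<le> L * norm h"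
proof -
  define w where "w = blinfun_apply (H x) h"
  have "(w \<bullet> w) \<le> L * norm h * norm w"
  proof (rule ccontr)
    assume a: "\<not> ?thesis"
    define q where "q = (\<lambda>s. g (x + s *\<^sub>R h) \<bullet> w - L * s * norm h * norm w)"
    have "(q has_real_derivative (w \<bullet> w - L * norm h * norm w)) (at 0)"
      unfolding q_def w_def by (auto intro!: derivative_eq_intros line_deriv)
    from DERIV_pos_inc_right[OF this] a
    obtain d where d: "d > 0" "\<And>s. s > 0 \<Longrightarrow> s < d \<Longrightarrow> q 0 < q (0 + s)" by force
    define s where "s = d / 2"
    have s: "s > 0" "s < d" using d by (auto simp: s_def)
    have "(g (x + s *\<^sub>R h) - g x) \<bullet> w \<le> norm (g (x + s *\<^sub>R h) - g x) * norm w"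
      using norm_cauchy_schwarz by blast
    also have "norm (g (x + s *\<^sub>R h) - g x) \<le> L * norm (s *\<^sub>R h)"
      using lipschitz unfolding lipschitz_on_def dist_norm by (metis UNIV_I add_diff_cancel_left')
    then have "norm (g (x + s *\<^sub>R h) - g x) * norm w \<le> L * norm (s *\<^sub>R h) * norm w"
      by (simp add: mult_right_mono)
    finally have "q s \<le> q 0" using s by (simp add: q_def inner_diff_left algebra_simps)
    with d(2)[OF s] show False by simp
  qed
  then have "norm w * norm w \<le> (L * norm h) * norm w" by (simp add: dot_square_norm power2_eq_square)
  moreover have "0 \<le> L * norm h" using L_nonneg mu_pos by simp
  ultimately show ?thesis unfolding w_def
    by (metis mult_right_le_imp_le norm_ge_zero order_less_le mult_nonneg_nonneg)
qed

lemma nonmin_pos: "\<not> (\<forall>y. \<phi> z \<le> \<phi> y) \<Longrightarrow> \<phi> z - \<phi> xstar > 0"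
  using minimizer by (metis diff_gt_0_iff_gt not_le order_trans)

end

lemma powr_bound:
  fixes f :: "real \<Rightarrow> 'b::real_normed_vector"
  assumes t: "t > 0" and cf: "continuous_on {0..t} f" and f0: "f 0 = 0"
    and df: "\<And>s. 0 < s \<Longrightarrow> s < t \<Longrightarrow> (f has_vector_derivative f' s) (at s)"
    and bd: "\<And>s. 0 < s \<Longrightarrow> s < t \<Longrightarrow> norm (f' s) \<le> C * s powr p"
    and p: "p \<ge> 0"
  shows "norm (f t) \<le> C * t powr (p + 1) / (p + 1)"
proof -
  define G where "G = (\<lambda>s. C * s powr (p + 1) / (p + 1))"
  have cG: "continuous_on {0..t} G"
    unfolding G_def using p by (intro continuous_intros continuous_on_powr') auto
  have dG: "(G has_vector_derivative C * s powr p) (at s)" if "0 < s" for s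
  proof -
    have "((\<lambda>s. s powr (p + 1)) has_real_derivative (p + 1) * s powr (p + 1 - 1)) (at s)"
      using that by (rule has_real_derivative_powr)
    then have "(G has_real_derivative C * ((p + 1) * s powr (p + 1 - 1)) / (p + 1)) (at s)"
      unfolding G_def using that by (auto intro!: derivative_eq_intros)
    then show ?thesis using p by (simp add: has_real_derivative_iff_has_vector_derivative)
  qed
  have "norm (f t - f 0) \<le> G t - G 0"
    by (rule differentiable_bound_general[OF t cf cG df dG bd]) auto
  then show ?thesis using f0 p by (simp add: G_def)
qed

context din begin

lemma sol_facts:
  obtains v a where "xs z 0 = z"
    "\<And>t. t \<ge> 0 \<Longrightarrow> (xs z has_vector_derivative v t) (at t within {0..})"
    "continuous_on {0..} v" "v 0 = 0"
    "\<And>t. t > 0 \<Longrightarrow> (v has_vector_derivative a t) (at t)"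
    "\<And>t. t > 0 \<Longrightarrow> a t = - (\<alpha> / t) *\<^sub>R v t - \<beta> *\<^sub>R blinfun_apply (H (xs z t)) (v t) - g (xs z t)"
proof -
  from sol[of z] obtain v a where
    "xs z 0 = z"
    "\<forall>t\<ge>0. (xs z has_vector_derivative v t) (at t within {0..})"
    "continuous_on {0..} v" "v 0 = 0"
    "\<forall>t>0. (v has_vector_derivative a t) (at t)"
    and E: "\<forall>t>0. a t + (\<alpha> / t) *\<^sub>R v t + \<beta> *\<^sub>R blinfun_apply (H (xs z t)) (v t) + g (xs z t) = 0"
    unfolding DIN_sol_def by blast
  moreover have "\<And>t. t > 0 \<Longrightarrow> a t = - (\<alpha> / t) *\<^sub>R v t - \<beta> *\<^sub>R blinfun_apply (H (xs z t)) (v t) - g (xs z t)"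
  proof -
    fix t :: real assume "t > 0"
    have "a t = (a t + (\<alpha> / t) *\<^sub>R v t + \<beta> *\<^sub>R blinfun_apply (H (xs z t)) (v t) + g (xs z t))
       - (\<alpha> / t) *\<^sub>R v t - \<beta> *\<^sub>R blinfun_apply (H (xs z t)) (v t) - g (xs z t)" by simp
    also have "\<dots> = - (\<alpha> / t) *\<^sub>R v t - \<beta> *\<^sub>R blinfun_apply (H (xs z t)) (v t) - g (xs z t)"
      using E \<open>t > 0\<close> by simp
    finally show "a t = - (\<alpha> / t) *\<^sub>R v t - \<beta> *\<^sub>R blinfun_apply (H (xs z t)) (v t) - g (xs z t)" .
  qed
  ultimately show ?thesis using that by blast
qed

end

locale traj = din +
  fixes z :: "'a::euclidean_space" and v a :: "real \<Rightarrow> 'a"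
  assumes x0: "xs z 0 = z"
    and xd: "\<And>t. t \<ge> 0 \<Longrightarrow> (xs z has_vector_derivative v t) (at t within {0..})"
    and vc: "continuous_on {0..} v" and v0: "v 0 = 0"
    and vd: "\<And>t. t > 0 \<Longrightarrow> (v has_vector_derivative a t) (at t)"
    and ae: "\<And>t. t > 0 \<Longrightarrow> a t = - (\<alpha> / t) *\<^sub>R v t - \<beta> *\<^sub>R blinfun_apply (H (xs z t)) (v t) - g (xs z t)"
begin

abbreviation "x \<equiv> xs z"

lemma xat: "t > 0 \<Longrightarrow> (x has_vector_derivative v t) (at t)"
proof -
  assume t: "t > 0"
  have "(x has_vector_derivative v t) (at t within {0..})" by (rule xd) (use t in simp)
  then have "(x has_vector_derivative v t) (at t within {0<..})"
    by (rule has_vector_derivative_within_subset) auto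
  moreover have "at t within {0<..} = at t" using t by (intro at_within_open) auto
  ultimately show ?thesis by simp
qed

lemma xc: "continuous_on {0..} x"
  unfolding continuous_on_eq_continuous_within
  by (auto intro: has_vector_derivative_continuous[OF xd])

lemma xc': "continuous_on {0..t} x"
  by (rule continuous_on_subset[OF xc]) auto

lemma vc': "continuous_on {0..t} v"
  by (rule continuous_on_subset[OF vc]) auto

definition "W t = \<phi> (x t) + 1/2 * (norm (v t))\<^sup>2"

lemma phi_cont: "continuous_on S \<phi>"
  by (rule continuous_at_imp_continuous_on) (use grad has_derivative_continuous in blast)

lemma Wc: "continuous_on {0..} W"
  unfolding W_def
  by (intro continuous_intros continuous_on_compose2[OF phi_cont xc] vc) auto

lemma phix_deriv: "t > 0 \<Longrightarrow> ((\<lambda>s. \<phi> (x s)) has_real_derivative (g (x t) \<bullet> v t)) (at t)"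
proof -
  assume t: "t > 0"
  have "(x has_derivative (\<lambda>h. h *\<^sub>R v t)) (at t)" using xat[OF t] by (simp add: has_vector_derivative_def)
  from has_derivative_compose[OF this grad]
  have "((\<lambda>s. \<phi> (x s)) has_derivative (\<lambda>h. g (x t) \<bullet> (h *\<^sub>R v t))) (at t)" .
  then show ?thesis by (simp add: has_field_derivative_def mult.commute[of _ "g (x t) \<bullet> v t"])
qed

lemma nv_deriv: "t > 0 \<Longrightarrow> ((\<lambda>s. (norm (v s))\<^sup>2) has_real_derivative (2 * (v t \<bullet> a t))) (at t)"
proof -
  assume t: "t > 0"
  have "(v has_derivative (\<lambda>h. h *\<^sub>R a t)) (at t)" using vd[OF t] by (simp add: has_vector_derivative_def)
  then have "((\<lambda>s. v s \<bullet> v s) has_derivative (\<lambda>h. v t \<bullet> (h *\<^sub>R a t) + (h *\<^sub>R a t) \<bullet> v t)) (at t)"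
    by (intro has_derivative_inner)
  then have "((\<lambda>s. v s \<bullet> v s) has_derivative (\<lambda>h. 2 * (v t \<bullet> a t) * h)) (at t)"
    by (rule has_derivative_eq_rhs) (simp add: fun_eq_iff inner_commute algebra_simps)
  then show ?thesis by (simp add: has_field_derivative_def power2_norm_eq_inner)
qed

lemma Wd: "t > 0 \<Longrightarrow> (W has_real_derivative (- (\<alpha> / t) * (norm (v t))\<^sup>2 - \<beta> * (blinfun_apply (H (x t)) (v t) \<bullet> v t))) (at t)"
proof -
  assume t: "t > 0"
  have "(W has_real_derivative (g (x t) \<bullet> v t + 1/2 * (2 * (v t \<bullet> a t)))) (at t)"
    unfolding W_def[abs_def] by (intro DERIV_add phix_deriv DERIV_cmult nv_deriv t)
  moreover have "g (x t) \<bullet> v t + 1/2 * (2 * (v t \<bullet> a t)) = - (\<alpha> / t) * (norm (v t))\<^sup>2 - \<beta> * (blinfun_apply (H (x t)) (v t) \<bullet> v t)"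
  proof -
    have va: "v t \<bullet> a t = - (\<alpha> / t) * (v t \<bullet> v t) - \<beta> * (v t \<bullet> blinfun_apply (H (x t)) (v t)) - v t \<bullet> g (x t)"
      unfolding ae[OF t] by (simp add: inner_diff_right)
    show ?thesis unfolding va by (simp add: inner_commute power2_norm_eq_inner field_simps)
  qed
  ultimately show ?thesis by simp
qed

lemma Wd_le: "t > 0 \<Longrightarrow> - (\<alpha> / t) * (norm (v t))\<^sup>2 - \<beta> * (blinfun_apply (H (x t)) (v t) \<bullet> v t) \<le> - (\<beta> * \<mu>) * (norm (v t))\<^sup>2"
proof -
  assume t: "t > 0"
  have "0 \<le> (\<alpha> / t) * (norm (v t))\<^sup>2" using alpha_pos t by simp
  moreover have "\<beta> * (\<mu> * (norm (v t))\<^sup>2) \<le> \<beta> * (blinfun_apply (H (x t)) (v t) \<bullet> v t)"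
    using hess_lower beta_pos by (simp add: mult_left_mono)
  ultimately show ?thesis by (simp add: algebra_simps)
qed

lemma W_mono: "0 \<le> s \<Longrightarrow> s \<le> t \<Longrightarrow> W t \<le> W s"
proof -
  assume st: "0 \<le> s" "s \<le> t"
  show ?thesis
  proof (rule DERIV_nonpos_imp_decreasing_open[OF st(2)])
    fix r assume r: "s < r" "r < t"
    then have r0: "r > 0" using st by simp
    have "- (\<beta> * \<mu>) * (norm (v r))\<^sup>2 \<le> 0" using beta_pos mu_pos by simp
    then show "\<exists>y. (W has_real_derivative y) (at r) \<and> y \<le> 0"
      using Wd[OF r0] Wd_le[OF r0] by (meson order_trans)
  next
    show "continuous_on {s..t} W" by (rule continuous_on_subset[OF Wc]) (use st in auto)
  qed
qed

lemma W0: "W 0 = \<phi> z" by (simp add: W_def x0 v0)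

lemma phi_le: "t \<ge> 0 \<Longrightarrow> \<phi> (x t) \<le> \<phi> z"
proof -
  assume t: "t \<ge> 0"
  have "0 \<le> 1 / 2 * (norm (v t))\<^sup>2" by simp
  then show ?thesis using W_mono[of 0 t] W0 t unfolding W_def by linarith
qed

lemma W_ge: "W t \<ge> \<phi> xstar + 1/2 * (norm (v t))\<^sup>2"
  using minimizer by (simp add: W_def)

lemma v_sq: "t \<ge> 0 \<Longrightarrow> (norm (v t))\<^sup>2 \<le> 2 * (\<phi> z - \<phi> xstar)"
  using W_mono[of 0 t] W0 W_ge[of t] by simp

end

context din begin
definition "mm = 1 / sqrt \<mu>"
definition "AA = \<beta> * L * mm + 1 + L * mm"
definition "KK = AA * L * (\<beta> + 1)"
definition "K2 = \<alpha> * KK + \<beta> * L * AA + L * AA"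
definition "K3 = KK + K2 + KK * K2"
definition "tau = min 1 (1 / (2 * (1 + \<alpha>)\<^sup>2 * (K3 + 1)))"
definition "cc = 1 / (2 * (1 + \<alpha>))"

lemma L_pos: "L > 0" using L_nonneg mu_pos by simp
lemma mm_pos: "mm > 0" using mu_pos by (simp add: mm_def)
lemma AA_ge: "AA \<ge> 1" using mm_pos L_pos beta_pos by (simp add: AA_def)
lemma KK_nonneg: "KK \<ge> 0" using AA_ge L_pos beta_pos by (simp add: KK_def)
lemma K2_nonneg: "K2 \<ge> 0" using AA_ge L_pos beta_pos alpha_pos KK_nonneg by (simp add: K2_def)
lemma K3_nonneg: "K3 \<ge> 0" using KK_nonneg K2_nonneg by (simp add: K3_def)
lemma tau_pos: "tau > 0" using K3_nonneg alpha_pos by (simp add: tau_def)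
lemma tau_le1: "tau \<le> 1" by (simp add: tau_def)
lemma tau_K3: "tau * K3 \<le> 1 / (2 * (1 + \<alpha>)\<^sup>2)"
proof -
  have p: "2 * (1 + \<alpha>)\<^sup>2 > 0" using alpha_pos by simp
  have "tau * K3 \<le> (1 / (2 * (1 + \<alpha>)\<^sup>2 * (K3 + 1))) * K3"
    using K3_nonneg by (intro mult_right_mono) (auto simp: tau_def)
  also have "\<dots> = (1 / (2 * (1 + \<alpha>)\<^sup>2)) * (K3 / (K3 + 1))" using K3_nonneg by simp
  also have "\<dots> \<le> (1 / (2 * (1 + \<alpha>)\<^sup>2)) * 1"
    using K3_nonneg p by (intro mult_left_mono) auto
  finally show ?thesis by simp
qed
lemma cc_pos: "cc > 0" using alpha_pos by (simp add: cc_def)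
end

lemma lip_g: "L-lipschitz_on UNIV g \<Longrightarrow> norm (g x - g y) \<le> L * norm (x - y)"
  by (auto simp: lipschitz_on_def dist_norm)

locale trajn = traj +
  assumes D_pos: "\<phi> z > \<phi> xstar"
begin

abbreviation "G \<equiv> norm (g z)"

lemma G_sq: "G\<^sup>2 \<ge> 2 * \<mu> * (\<phi> z - \<phi> xstar)" by (rule grad_bound)
lemma G_pos: "G > 0"
proof -
  have "G\<^sup>2 > 0" using G_sq mu_pos D_pos by (smt (verit) mult_pos_pos)
  then show ?thesis by (simp add: zero_less_power2)
qed

lemma v_le: "t \<ge> 0 \<Longrightarrow> norm (v t) \<le> G * mm"
proof -
  assume t: "t \<ge> 0"
  have "\<mu> * (norm (v t))\<^sup>2 \<le> \<mu> * (2 * (\<phi> z - \<phi> xstar))"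
    using v_sq[OF t] mu_pos by (intro mult_left_mono) auto
  then have "\<mu> * (norm (v t))\<^sup>2 \<le> G\<^sup>2" using G_sq by (simp add: algebra_simps)
  then have "(norm (v t))\<^sup>2 \<le> G\<^sup>2 / \<mu>"
    using mu_pos by (simp add: field_simps)
  then have "sqrt ((norm (v t))\<^sup>2) \<le> sqrt (G\<^sup>2 / \<mu>)" by (rule real_sqrt_le_mono)
  then show ?thesis by (simp add: mm_def real_sqrt_divide)
qed

lemma gx_lip: "norm (g (x s) - g z) \<le> L * norm (x s - z)"
  by (rule lip_g[OF lipschitz])

lemma x_le1: "t \<ge> 0 \<Longrightarrow> norm (x t - z) \<le> G * mm * t"
proof (cases "t = 0")
  case True then show ?thesis by (simp add: x0)
next
  case False
  assume "t \<ge> 0"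
  then have t: "t > 0" using False by simp
  have "norm ((\<lambda>s. x s - z) t) \<le> (G * mm) * t powr (0 + 1) / (0 + 1)"
  proof (rule powr_bound[OF t])
    show "continuous_on {0..t} (\<lambda>s. x s - z)" by (intro continuous_intros xc')
    show "(\<lambda>s. x s - z) 0 = 0" by (simp add: x0)
    show "((\<lambda>s. x s - z) has_vector_derivative v s) (at s)" if "0 < s" "s < t" for s
      using xat[of s] that by (auto intro!: derivative_eq_intros)
    show "norm (v s) \<le> G * mm * s powr 0" if "0 < s" "s < t" for s
      using v_le[of s] that by simp
  qed simp
  then show ?thesis using t by simp
qed

definition "f1 s = s powr \<alpha> *\<^sub>R v s"
definition "f2 s = f1 s + (s powr (\<alpha> + 1) / (\<alpha> + 1)) *\<^sub>R g z"

lemma f1_cont: "continuous_on {0..t} f1"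
  unfolding f1_def using alpha_pos by (intro continuous_intros continuous_on_powr' vc') auto

lemma f2_cont: "continuous_on {0..t} f2"
  unfolding f2_def using alpha_pos by (intro continuous_intros continuous_on_powr' f1_cont) auto

lemma f1_deriv: "s > 0 \<Longrightarrow> (f1 has_vector_derivative
   - (s powr \<alpha>) *\<^sub>R (\<beta> *\<^sub>R blinfun_apply (H (x s)) (v s) + g (x s))) (at s)"
proof -
  assume s: "s > 0"
  have "((\<lambda>s. s powr \<alpha>) has_real_derivative \<alpha> * s powr (\<alpha> - 1)) (at s)"
    using s by (rule has_real_derivative_powr)
  from has_vector_derivative_scaleR[OF this vd[OF s]]
  have "(f1 has_vector_derivative s powr \<alpha> *\<^sub>R a s + (\<alpha> * s powr (\<alpha> - 1)) *\<^sub>R v s) (at s)"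
    unfolding f1_def .
  moreover have "s powr \<alpha> *\<^sub>R a s + (\<alpha> * s powr (\<alpha> - 1)) *\<^sub>R v s
      = - (s powr \<alpha>) *\<^sub>R (\<beta> *\<^sub>R blinfun_apply (H (x s)) (v s) + g (x s))"
  proof -
    have "\<alpha> * s powr (\<alpha> - 1) = s powr \<alpha> * (\<alpha> / s)" using s by (simp add: powr_diff)
    then show ?thesis unfolding ae[OF s] by (simp add: algebra_simps)
  qed
  ultimately show ?thesis by simp
qed

lemma f2_deriv: "s > 0 \<Longrightarrow> (f2 has_vector_derivative
   - (s powr \<alpha>) *\<^sub>R (\<beta> *\<^sub>R blinfun_apply (H (x s)) (v s) + (g (x s) - g z))) (at s)"
proof -
  assume s: "s > 0"
  have "((\<lambda>s. s powr (\<alpha> + 1)) has_real_derivative (\<alpha> + 1) * s powr (\<alpha> + 1 - 1)) (at s)"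
    using s by (rule has_real_derivative_powr)
  then have "((\<lambda>s. s powr (\<alpha> + 1) / (\<alpha> + 1)) has_real_derivative s powr \<alpha>) (at s)"
    using alpha_pos s by (auto intro!: derivative_eq_intros)
  from has_vector_derivative_scaleR[OF this has_vector_derivative_const[of "g z"]]
  have "((\<lambda>s. (s powr (\<alpha> + 1) / (\<alpha> + 1)) *\<^sub>R g z) has_vector_derivative (s powr \<alpha>) *\<^sub>R g z) (at s)"
    by simp
  from has_vector_derivative_add[OF f1_deriv[OF s] this]
  show ?thesis unfolding f2_def[abs_def] by (simp add: algebra_simps)
qed

lemma f1_val: "t > 0 \<Longrightarrow> norm (f1 t) = t powr \<alpha> * norm (v t)"
  by (simp add: f1_def)

lemma f2_val: "t > 0 \<Longrightarrow> f2 t = t powr \<alpha> *\<^sub>R (v t + (t / (1 + \<alpha>)) *\<^sub>R g z)"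
  by (simp add: f2_def f1_def powr_add algebra_simps)

end

context trajn begin

lemma gx_bound1: "s \<ge> 0 \<Longrightarrow> s \<le> 1 \<Longrightarrow> norm (g (x s)) \<le> G + L * G * mm"
proof -
  assume s: "s \<ge> 0" "s \<le> 1"
  have "norm (g (x s)) \<le> G + norm (g (x s) - g z)" by (metis norm_triangle_sub add.commute)
  also have "norm (g (x s) - g z) \<le> L * (G * mm * s)"
    using gx_lip[of s] x_le1[OF s(1)] L_pos by (meson mult_left_mono less_imp_le order_trans)
  also have "L * (G * mm * s) \<le> L * G * mm"
    using s L_pos G_pos mm_pos by (simp add: mult_left_le)
  finally show ?thesis by simp
qed

lemma Hv_bound: "norm (blinfun_apply (H y) (v s)) \<le> L * norm (v s)"
  by (rule hess_upper)

lemma v_le2: "t > 0 \<Longrightarrow> t \<le> 1 \<Longrightarrow> norm (v t) \<le> G * AA * t"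
proof -
  assume t: "t > 0" "t \<le> 1"
  have "norm (f1 t) \<le> (G * AA) * t powr (\<alpha> + 1) / (\<alpha> + 1)"
  proof (rule powr_bound[OF t(1) f1_cont])
    show "f1 0 = 0" using alpha_pos by (simp add: f1_def)
    show "(f1 has_vector_derivative - (s powr \<alpha>) *\<^sub>R (\<beta> *\<^sub>R blinfun_apply (H (x s)) (v s) + g (x s))) (at s)"
      if "0 < s" "s < t" for s using f1_deriv that by simp
    show "norm (- (s powr \<alpha>) *\<^sub>R (\<beta> *\<^sub>R blinfun_apply (H (x s)) (v s) + g (x s))) \<le> G * AA * s powr \<alpha>"
      if s: "0 < s" "s < t" for s
    proof -
      have "norm (\<beta> *\<^sub>R blinfun_apply (H (x s)) (v s) + g (x s)) \<le> \<beta> * norm (blinfun_apply (H (x s)) (v s)) + norm (g (x s))"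
        using beta_pos by (metis norm_triangle_ineq norm_scaleR abs_of_pos)
      also have "\<dots> \<le> \<beta> * (L * (G * mm)) + (G + L * G * mm)"
      proof (intro add_mono mult_left_mono)
        show "norm (blinfun_apply (H (x s)) (v s)) \<le> L * (G * mm)"
          using Hv_bound[of "x s" s] v_le[of s] s L_pos by (meson mult_left_mono less_imp_le order_trans)
        show "norm (g (x s)) \<le> G + L * G * mm" using gx_bound1[of s] s t by simp
      qed (use beta_pos in auto)
      also have "\<dots> = G * AA" by (simp add: AA_def algebra_simps)
      finally have "norm (\<beta> *\<^sub>R blinfun_apply (H (x s)) (v s) + g (x s)) \<le> G * AA" .
      then have "s powr \<alpha> * norm (\<beta> *\<^sub>R blinfun_apply (H (x s)) (v s) + g (x s)) \<le> s powr \<alpha> * (G * AA)"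
        by (intro mult_left_mono) auto
      then show ?thesis by (simp add: mult.commute)
    qed
  qed (use alpha_pos in simp)
  also have "\<dots> \<le> (G * AA) * t powr (\<alpha> + 1) / 1"
    using alpha_pos G_pos AA_ge by (intro frac_le) auto
  finally have "t powr \<alpha> * norm (v t) \<le> t powr \<alpha> * (G * AA * t)"
    using t by (simp add: f1_val powr_add mult_ac)
  then show ?thesis using t by simp
qed

lemma x_le2: "t \<ge> 0 \<Longrightarrow> t \<le> 1 \<Longrightarrow> norm (x t - z) \<le> G * AA * t\<^sup>2 / 2"
proof (cases "t = 0")
  case True then show ?thesis by (simp add: x0)
next
  case False
  assume "t \<ge> 0" "t \<le> 1"
  then have t: "t > 0" "t \<le> 1" using False by auto
  have "norm ((\<lambda>s. x s - z) t) \<le> (G * AA) * t powr (1 + 1) / (1 + 1)"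
  proof (rule powr_bound[OF t(1)])
    show "continuous_on {0..t} (\<lambda>s. x s - z)" by (intro continuous_intros xc')
    show "(\<lambda>s. x s - z) 0 = 0" by (simp add: x0)
    show "((\<lambda>s. x s - z) has_vector_derivative v s) (at s)" if "0 < s" "s < t" for s
      using xat[of s] that by (auto intro!: derivative_eq_intros)
    show "norm (v s) \<le> G * AA * s powr 1" if "0 < s" "s < t" for s
      using v_le2[of s] that t by simp
  qed simp
  then show ?thesis using t by (simp add: power2_eq_square)
qed

lemma r_bound: "t > 0 \<Longrightarrow> t \<le> 1 \<Longrightarrow> norm (v t + (t / (1 + \<alpha>)) *\<^sub>R g z) \<le> G * KK * t\<^sup>2"
proof -
  assume t: "t > 0" "t \<le> 1"
  have "norm (f2 t) \<le> (G * KK) * t powr (\<alpha> + 1 + 1) / (\<alpha> + 1 + 1)"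
  proof (rule powr_bound[OF t(1) f2_cont])
    show "f2 0 = 0" using alpha_pos by (simp add: f2_def f1_def)
    show "(f2 has_vector_derivative - (s powr \<alpha>) *\<^sub>R (\<beta> *\<^sub>R blinfun_apply (H (x s)) (v s) + (g (x s) - g z))) (at s)"
      if "0 < s" "s < t" for s using f2_deriv that by simp
    show "norm (- (s powr \<alpha>) *\<^sub>R (\<beta> *\<^sub>R blinfun_apply (H (x s)) (v s) + (g (x s) - g z))) \<le> G * KK * s powr (\<alpha> + 1)"
      if s: "0 < s" "s < t" for s
    proof -
      have s1: "s \<le> 1" using s t by simp
      have "norm (\<beta> *\<^sub>R blinfun_apply (H (x s)) (v s) + (g (x s) - g z)) \<le> \<beta> * norm (blinfun_apply (H (x s)) (v s)) + norm (g (x s) - g z)"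
        using beta_pos by (metis norm_triangle_ineq norm_scaleR abs_of_pos)
      also have "\<dots> \<le> \<beta> * (L * (G * AA * s)) + L * (G * AA * s\<^sup>2 / 2)"
      proof (intro add_mono mult_left_mono)
        show "norm (blinfun_apply (H (x s)) (v s)) \<le> L * (G * AA * s)"
          using Hv_bound[of "x s" s] v_le2[of s] s s1 L_pos by (meson mult_left_mono less_imp_le order_trans)
        show "norm (g (x s) - g z) \<le> L * (G * AA * s\<^sup>2 / 2)"
          using gx_lip[of s] x_le2[of s] s s1 L_pos by (meson mult_left_mono less_imp_le order_trans)
      qed (use beta_pos in auto)
      also have "\<dots> \<le> \<beta> * (L * (G * AA * s)) + L * (G * AA * s)"
      proof -
        have "s\<^sup>2 / 2 \<le> s" using s s1 by (simp add: power2_eq_square)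
        then have "G * AA * s\<^sup>2 / 2 \<le> G * AA * s" using G_pos AA_ge
          by (metis mult_left_mono times_divide_eq_right less_imp_le mult_nonneg_nonneg order_trans zero_le_one)
        then show ?thesis using L_pos by (simp add: mult_left_mono)
      qed
      also have "\<dots> = G * KK * s" by (simp add: KK_def algebra_simps)
      finally have "norm (\<beta> *\<^sub>R blinfun_apply (H (x s)) (v s) + (g (x s) - g z)) \<le> G * KK * s" .
      then have "s powr \<alpha> * norm (\<beta> *\<^sub>R blinfun_apply (H (x s)) (v s) + (g (x s) - g z)) \<le> s powr \<alpha> * (G * KK * s)"
        by (intro mult_left_mono) auto
      then show ?thesis using s by (simp add: powr_add mult_ac)
    qed
  qed (use alpha_pos in simp)
  also have "\<dots> \<le> (G * KK) * t powr (\<alpha> + 1 + 1) / 1"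
    using alpha_pos G_pos KK_nonneg by (intro frac_le) auto
  finally have "t powr \<alpha> * norm (v t + (t / (1 + \<alpha>)) *\<^sub>R g z) \<le> t powr \<alpha> * (G * KK * t\<^sup>2)"
    using t by (simp add: f2_val powr_add mult_ac power2_eq_square)
  then show ?thesis using t by simp
qed

end

lemma norm3: "norm (- A - B - C) \<le> norm A + norm B + norm (C::'b::real_normed_vector)"
proof -
  have "norm (- A - B - C) \<le> norm (- A - B) + norm C" by (rule norm_triangle_ineq4)
  moreover have "norm (- A - B) \<le> norm (- A) + norm B" by (rule norm_triangle_ineq4)
  ultimately show ?thesis by simp
qed

context traj begin

lemma restart_fun_eq: "t > 0 \<Longrightarrow> restart_fun x \<alpha> lam t = v t \<bullet> a t + lam * (\<alpha> / t) * (norm (v t))\<^sup>2"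
proof -
  assume t: "t > 0"
  have vd_eq: "vector_derivative x (at s) = v s" if "s > 0" for s
    using vector_derivative_at[OF xat[OF that]] .
  have "((\<lambda>s. (norm (vector_derivative x (at s)))\<^sup>2) has_field_derivative (2 * (v t \<bullet> a t))) (at t)"
    by (rule has_field_derivative_transform_within_open[OF nv_deriv[OF t], of "{0<..}"]) (use t vd_eq in auto)
  then have "deriv (\<lambda>s. (norm (vector_derivative x (at s)))\<^sup>2) t = 2 * (v t \<bullet> a t)"
    by (rule DERIV_imp_deriv)
  then show ?thesis unfolding restart_fun_def using vd_eq[OF t] by simp
qed

end

context trajn begin

lemma K_le_K3: "KK \<le> K3"
  using KK_nonneg K2_nonneg by (simp add: K3_def)

lemma bnd_b: "1 / (1 + \<alpha>) \<le> 1" "1 / (1 + \<alpha>) > 0"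
  using alpha_pos by auto

lemma tK: "0 < t \<Longrightarrow> t \<le> tau \<Longrightarrow> t * K3 \<le> (1 / (1 + \<alpha>))\<^sup>2 / 2"
proof -
  assume t: "0 < t" "t \<le> tau"
  have "t * K3 \<le> tau * K3" using t K3_nonneg by (simp add: mult_right_mono)
  also have "\<dots> \<le> 1 / (2 * (1 + \<alpha>)\<^sup>2)" by (rule tau_K3)
  also have "\<dots> = (1 / (1 + \<alpha>))\<^sup>2 / 2" by (simp add: power_divide)
  finally show ?thesis .
qed

lemma v_lower: "0 < t \<Longrightarrow> t \<le> tau \<Longrightarrow> cc * G * t \<le> norm (v t)"
proof -
  assume t: "0 < t" "t \<le> tau"
  have t1: "t \<le> 1" using t tau_le1 by simp
  define b where "b = 1 / (1 + \<alpha>)"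
  have b: "0 < b" "b \<le> 1" using bnd_b by (auto simp: b_def)
  have r: "norm (v t + (t * b) *\<^sub>R g z) \<le> G * KK * t\<^sup>2" using r_bound[OF t(1) t1] by (simp add: b_def)
  have "norm ((t * b) *\<^sub>R g z) \<le> norm (v t) + norm (v t + (t * b) *\<^sub>R g z)"
  proof -
    have "(t * b) *\<^sub>R g z = (v t + (t * b) *\<^sub>R g z) - v t" by simp
    then have "norm ((t * b) *\<^sub>R g z) \<le> norm (v t + (t * b) *\<^sub>R g z) + norm (v t)"
      by (metis norm_triangle_ineq4)
    then show ?thesis by simp
  qed
  then have h: "t * b * G \<le> norm (v t) + G * KK * t\<^sup>2" using r t b by simp
  have "KK * t \<le> b\<^sup>2 / 2"
  proof -
    have "KK * t \<le> K3 * t" using K_le_K3 t by (simp add: mult_right_mono)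
    then show ?thesis using tK[OF t] by (simp add: b_def mult.commute)
  qed
  also have "b\<^sup>2 / 2 \<le> b / 2" using b by (simp add: power2_eq_square mult_left_le)
  finally have "KK * t \<le> b / 2" .
  then have "G * t * (KK * t) \<le> G * t * (b / 2)" using G_pos t by (simp add: mult_left_mono)
  then have "G * KK * t\<^sup>2 \<le> t * b * G / 2" by (simp add: power2_eq_square mult_ac)
  with h have "t * b * G / 2 \<le> norm (v t)" by linarith
  then show ?thesis by (simp add: cc_def b_def mult_ac)
qed

lemma e_bound: "0 < t \<Longrightarrow> t \<le> 1 \<Longrightarrow> norm (a t + (1 / (1 + \<alpha>)) *\<^sub>R g z) \<le> G * t * K2"
proof -
  assume t: "0 < t" "t \<le> 1"
  define b where "b = 1 / (1 + \<alpha>)"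
  define r where "r = v t + (t * b) *\<^sub>R g z"
  have rb: "norm r \<le> G * KK * t\<^sup>2" using r_bound[OF t] by (simp add: b_def r_def)
  have ab: "(\<alpha> + 1) * b = 1" using alpha_pos by (simp add: b_def)
  have E: "a t + b *\<^sub>R g z = - (\<alpha> / t) *\<^sub>R r - \<beta> *\<^sub>R blinfun_apply (H (x t)) (v t) - (g (x t) - g z)"
  proof -
    have "a t + b *\<^sub>R g z = - (\<alpha> / t) *\<^sub>R v t - \<beta> *\<^sub>R blinfun_apply (H (x t)) (v t) - g (x t) + b *\<^sub>R g z"
      using ae[OF t(1)] by simp
    also have "- (\<alpha> / t) *\<^sub>R v t = - (\<alpha> / t) *\<^sub>R r + (\<alpha> * b) *\<^sub>R g z"
      using t by (simp add: r_def algebra_simps)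
    finally have "a t + b *\<^sub>R g z = - (\<alpha> / t) *\<^sub>R r - \<beta> *\<^sub>R blinfun_apply (H (x t)) (v t) - g (x t) + ((\<alpha> + 1) * b) *\<^sub>R g z"
      by (simp add: algebra_simps)
    then show ?thesis using ab by simp
  qed
  have "norm (a t + b *\<^sub>R g z) \<le> norm ((\<alpha> / t) *\<^sub>R r) + norm (\<beta> *\<^sub>R blinfun_apply (H (x t)) (v t)) + norm (g (x t) - g z)"
    unfolding E scaleR_minus_left by (rule norm3)
  also have "\<dots> \<le> \<alpha> * G * KK * t + \<beta> * L * G * AA * t + L * G * AA * t"
  proof (intro add_mono)
    have "norm ((\<alpha> / t) *\<^sub>R r) = (\<alpha> / t) * norm r" using alpha_pos t by simp
    also have "\<dots> \<le> (\<alpha> / t) * (G * KK * t\<^sup>2)" using rb alpha_pos t by (intro mult_left_mono) auto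
    also have "\<dots> = \<alpha> * G * KK * t" using t by (simp add: power2_eq_square)
    finally show "norm ((\<alpha> / t) *\<^sub>R r) \<le> \<alpha> * G * KK * t" .
    have "norm (\<beta> *\<^sub>R blinfun_apply (H (x t)) (v t)) = \<beta> * norm (blinfun_apply (H (x t)) (v t))"
      using beta_pos by simp
    also have "\<dots> \<le> \<beta> * (L * (G * AA * t))"
      using Hv_bound[of "x t" t] v_le2[OF t] L_pos beta_pos
      by (meson mult_left_mono less_imp_le order_trans)
    finally show "norm (\<beta> *\<^sub>R blinfun_apply (H (x t)) (v t)) \<le> \<beta> * L * G * AA * t" by (simp add: mult_ac)
    have "norm (g (x t) - g z) \<le> L * (G * AA * t\<^sup>2 / 2)"
      using gx_lip[of t] x_le2[of t] t L_pos by (meson mult_left_mono less_imp_le order_trans)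
    also have "G * AA * t\<^sup>2 / 2 \<le> G * AA * t"
    proof -
      have "t\<^sup>2 / 2 \<le> t" using t by (simp add: power2_eq_square)
      then show ?thesis using G_pos AA_ge
        by (metis mult_left_mono times_divide_eq_right less_imp_le mult_nonneg_nonneg order_trans zero_le_one)
    qed
    then have "L * (G * AA * t\<^sup>2 / 2) \<le> L * (G * AA * t)" using L_pos by (simp add: mult_left_mono)
    finally show "norm (g (x t) - g z) \<le> L * G * AA * t" by (simp add: mult_ac)
  qed
  also have "\<dots> = G * t * K2" by (simp add: K2_def algebra_simps)
  finally show ?thesis by (simp add: b_def)
qed

end

context trajn begin

lemma va_pos: "0 < t \<Longrightarrow> t \<le> tau \<Longrightarrow> v t \<bullet> a t \<ge> t * G\<^sup>2 * (1 / (1 + \<alpha>))\<^sup>2 / 2"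
proof -
  assume t: "0 < t" "t \<le> tau"
  have t1: "t \<le> 1" using t tau_le1 by simp
  define b where "b = 1 / (1 + \<alpha>)"
  have b: "0 < b" "b \<le> 1" using bnd_b by (auto simp: b_def)
  define r where "r = v t + (t * b) *\<^sub>R g z"
  define e where "e = a t + b *\<^sub>R g z"
  have R: "norm r \<le> G * KK * t\<^sup>2" using r_bound[OF t(1) t1] by (simp add: b_def r_def)
  have E: "norm e \<le> G * t * K2" using e_bound[OF t(1) t1] by (simp add: b_def e_def)
  have vr: "v t = r - (t * b) *\<^sub>R g z" by (simp add: r_def)
  have ae': "a t = e - b *\<^sub>R g z" by (simp add: e_def)
  have ip: "v t \<bullet> a t = r \<bullet> e - b * (r \<bullet> g z) - t * b * (g z \<bullet> e) + t * b\<^sup>2 * G\<^sup>2"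
  proof -
    have gg: "g z \<bullet> g z = G * G" by (simp add: power2_norm_eq_inner[symmetric] power2_eq_square)
    show ?thesis
      unfolding vr ae' by (simp add: inner_diff_left inner_diff_right power2_eq_square inner_commute algebra_simps gg)
  qed
  have nR: "0 \<le> norm r" and nE: "0 \<le> norm e" by simp_all
  have Gp: "0 \<le> G" by simp
  have i1: "r \<bullet> e \<ge> - (G\<^sup>2 * (KK * K2) * t\<^sup>2)"
  proof -
    have "\<bar>r \<bullet> e\<bar> \<le> norm r * norm e" by (rule Cauchy_Schwarz_ineq2)
    also have "\<dots> \<le> (G * KK * t\<^sup>2) * (G * t * K2)"
      using R E nR nE KK_nonneg by (intro mult_mono) auto
    also have "\<dots> = G\<^sup>2 * (KK * K2) * t\<^sup>2 * t" by (simp add: power2_eq_square mult_ac)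
    also have "\<dots> \<le> G\<^sup>2 * (KK * K2) * t\<^sup>2 * 1"
      using t1 t KK_nonneg K2_nonneg by (intro mult_left_mono) auto
    finally show ?thesis by simp
  qed
  have i2: "b * (r \<bullet> g z) \<le> G\<^sup>2 * KK * t\<^sup>2"
  proof -
    have "\<bar>r \<bullet> g z\<bar> \<le> norm r * G" by (rule Cauchy_Schwarz_ineq2)
    also have "\<dots> \<le> (G * KK * t\<^sup>2) * G" using R by (intro mult_right_mono) auto
    finally have "r \<bullet> g z \<le> G\<^sup>2 * KK * t\<^sup>2" by (simp add: power2_eq_square mult_ac)
    moreover have "0 \<le> G\<^sup>2 * KK * t\<^sup>2" using KK_nonneg by simp
    ultimately show ?thesis
    proof (cases "r \<bullet> g z \<le> 0")
      case True
      then have "b * (r \<bullet> g z) \<le> 0" using b by (simp add: mult_nonneg_nonpos)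
      then show ?thesis using \<open>0 \<le> G\<^sup>2 * KK * t\<^sup>2\<close> by linarith
    next
      case False
      then have "b * (r \<bullet> g z) \<le> r \<bullet> g z" using b by (simp add: mult_left_le_one_le)
      then show ?thesis using \<open>r \<bullet> g z \<le> G\<^sup>2 * KK * t\<^sup>2\<close> by linarith
    qed
  qed
  have i3: "t * b * (g z \<bullet> e) \<le> G\<^sup>2 * K2 * t\<^sup>2"
  proof -
    have "\<bar>g z \<bullet> e\<bar> \<le> G * norm e" by (rule Cauchy_Schwarz_ineq2)
    also have "\<dots> \<le> G * (G * t * K2)" using E by (intro mult_left_mono) auto
    finally have ge: "g z \<bullet> e \<le> G\<^sup>2 * K2 * t" by (simp add: power2_eq_square mult_ac)
    have "t * b * (g z \<bullet> e) \<le> t * b * (G\<^sup>2 * K2 * t)" using ge t b by (intro mult_left_mono) auto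
    also have "\<dots> \<le> t * 1 * (G\<^sup>2 * K2 * t)" using t b K2_nonneg by (intro mult_right_mono mult_left_mono) auto
    finally show ?thesis by (simp add: power2_eq_square mult_ac)
  qed
  have sum: "v t \<bullet> a t \<ge> t * b\<^sup>2 * G\<^sup>2 - G\<^sup>2 * t\<^sup>2 * K3"
  proof -
    have "G\<^sup>2 * t\<^sup>2 * K3 = G\<^sup>2 * (KK * K2) * t\<^sup>2 + G\<^sup>2 * KK * t\<^sup>2 + G\<^sup>2 * K2 * t\<^sup>2"
      by (simp add: K3_def algebra_simps)
    then show ?thesis using ip i1 i2 i3 by linarith
  qed
  have "G\<^sup>2 * t\<^sup>2 * K3 = G\<^sup>2 * t * (t * K3)" by (simp add: power2_eq_square)
  also have "\<dots> \<le> G\<^sup>2 * t * (b\<^sup>2 / 2)" using tK[OF t] t by (intro mult_left_mono) (auto simp: b_def)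
  finally have "G\<^sup>2 * t\<^sup>2 * K3 \<le> G\<^sup>2 * t * (b\<^sup>2 / 2)" .
  with sum have "v t \<bullet> a t \<ge> t * G\<^sup>2 * b\<^sup>2 / 2" by (simp add: algebra_simps)
  then show ?thesis by (simp add: b_def)
qed

lemma rf_pos: "0 < t \<Longrightarrow> t \<le> tau \<Longrightarrow> restart_fun x \<alpha> lam t > 0"
proof -
  assume t: "0 < t" "t \<le> tau"
  have "0 < t * G\<^sup>2 * (1 / (1 + \<alpha>))\<^sup>2 / 2" using t G_pos alpha_pos by simp
  also have "\<dots> \<le> v t \<bullet> a t" by (rule va_pos[OF t])
  also have "\<dots> \<le> v t \<bullet> a t + lam * (\<alpha> / t) * (norm (v t))\<^sup>2" using lam0 alpha_pos t by simp
  finally show ?thesis using restart_fun_eq[OF t(1)] by simp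
qed

end

context din begin
definition "Tstar = tau * exp (1 / (\<beta> * \<mu>\<^sup>2 * cc\<^sup>2 * tau ^ 3))"
definition "q0 = 2 * \<beta> * \<mu>\<^sup>2 * cc\<^sup>2 * tau ^ 3 / 3"
definition "qq = max (1/2) (1 - q0)"

lemma Tstar_gt: "tau < Tstar"
proof -
  have "0 < 1 / (\<beta> * \<mu>\<^sup>2 * cc\<^sup>2 * tau ^ 3)" using beta_pos mu_pos cc_pos tau_pos by simp
  then have "1 < exp (1 / (\<beta> * \<mu>\<^sup>2 * cc\<^sup>2 * tau ^ 3))" by simp
  then show ?thesis unfolding Tstar_def using tau_pos by simp
qed

lemma q0_pos: "q0 > 0" using beta_pos mu_pos cc_pos tau_pos by (simp add: q0_def)
lemma qq_pos: "qq > 0" by (simp add: qq_def)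
lemma qq_lt1: "qq < 1" using q0_pos by (simp add: qq_def)
end

context trajn begin

lemma W_tau: "W tau \<le> \<phi> z - \<beta> * \<mu> * cc\<^sup>2 * G\<^sup>2 * tau ^ 3 / 3"
proof -
  define k where "k = \<beta> * \<mu> * cc\<^sup>2 * G\<^sup>2"
  define F where "F t = W t + k * t ^ 3 / 3" for t
  have "F tau \<le> F 0"
  proof (rule DERIV_nonpos_imp_decreasing_open[of 0 tau F])
    show "0 \<le> tau" using tau_pos by simp
    fix t assume t: "0 < t" "t < tau"
    have dF: "(F has_real_derivative (- (\<alpha> / t) * (norm (v t))\<^sup>2 - \<beta> * (blinfun_apply (H (x t)) (v t) \<bullet> v t)) + k * t\<^sup>2) (at t)"
      unfolding F_def[abs_def] using Wd[OF t(1)] by (auto intro!: derivative_eq_intros simp: power2_eq_square)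
    have vl: "(cc * G * t)\<^sup>2 \<le> (norm (v t))\<^sup>2"
      using v_lower[of t] t cc_pos G_pos by (intro power_mono) auto
    have "- (\<alpha> / t) * (norm (v t))\<^sup>2 - \<beta> * (blinfun_apply (H (x t)) (v t) \<bullet> v t) + k * t\<^sup>2
        \<le> - (\<beta> * \<mu>) * (norm (v t))\<^sup>2 + k * t\<^sup>2" using Wd_le[OF t(1)] by simp
    also have "\<dots> \<le> - (\<beta> * \<mu>) * (cc * G * t)\<^sup>2 + k * t\<^sup>2"
      using vl beta_pos mu_pos by (simp add: mult_left_mono)
    also have "\<dots> = 0" by (simp add: k_def power_mult_distrib)
    finally show "\<exists>y. (F has_real_derivative y) (at t) \<and> y \<le> 0" using dF by blast
  next
    show "continuous_on {0..tau} F" unfolding F_def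
      by (intro continuous_intros continuous_on_subset[OF Wc]) auto
  qed
  then show ?thesis using W0 by (simp add: F_def k_def)
qed

lemma v_far: "(\<forall>t. 0 < t \<and> t \<le> Tstar \<longrightarrow> restart_fun x \<alpha> lam t > 0) \<Longrightarrow>
   tau \<le> t \<Longrightarrow> t \<le> Tstar \<Longrightarrow> (norm (v t))\<^sup>2 \<ge> cc\<^sup>2 * G\<^sup>2 * tau ^ 3 / t"
proof -
  assume rf: "\<forall>t. 0 < t \<and> t \<le> Tstar \<longrightarrow> restart_fun x \<alpha> lam t > 0" and t: "tau \<le> t" "t \<le> Tstar"
  define p where "p = 2 * lam * \<alpha>"
  have p: "0 \<le> p" "p \<le> 1"
  proof -
    show "0 \<le> p" using lam0 alpha_pos by (simp add: p_def)
    have "lam * (2 * \<alpha>) \<le> 1 / (2 * \<alpha>) * (2 * \<alpha>)" using lam2 alpha_pos by (intro mult_right_mono) auto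
    then show "p \<le> 1" using alpha_pos by (simp add: p_def mult_ac)
  qed
  define h where "h s = s powr p * (norm (v s))\<^sup>2" for s
  have "h tau \<le> h t"
  proof (rule DERIV_nonneg_imp_increasing_open[OF t(1)])
    fix s assume s: "tau < s" "s < t"
    then have s0: "s > 0" using tau_pos by simp
    have "((\<lambda>s. s powr p) has_real_derivative p * s powr (p - 1)) (at s)"
      using s0 by (rule has_real_derivative_powr)
    from DERIV_mult[OF this nv_deriv[OF s0]]
    have dh: "(h has_real_derivative (p * s powr (p - 1) * (norm (v s))\<^sup>2 + 2 * (v s \<bullet> a s) * s powr p)) (at s)"
      unfolding h_def[abs_def] by simp
    have "p * s powr (p - 1) * (norm (v s))\<^sup>2 + 2 * (v s \<bullet> a s) * s powr p = 2 * s powr p * restart_fun x \<alpha> lam s"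
      using s0 by (simp add: restart_fun_eq powr_diff p_def field_simps)
    also have "\<dots> \<ge> 0" using rf s s0 t by (simp add: less_imp_le)
    finally show "\<exists>y. (h has_real_derivative y) (at s) \<and> 0 \<le> y" using dh by blast
  next
    show "continuous_on {tau..t} h" unfolding h_def using tau_pos
      by (intro continuous_intros continuous_on_subset[OF vc]) auto
  qed
  then have hh: "tau powr p * (norm (v tau))\<^sup>2 \<le> t powr p * (norm (v t))\<^sup>2" by (simp add: h_def)
  have t0: "t > 0" using t tau_pos by simp
  have "(tau / t) * (norm (v tau))\<^sup>2 \<le> (tau / t) powr p * (norm (v tau))\<^sup>2"
  proof (intro mult_right_mono)
    have "(tau / t) powr 1 \<le> (tau / t) powr p" using p t tau_pos by (intro powr_mono') auto
    then show "tau / t \<le> (tau / t) powr p" using t0 tau_pos by simp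
  qed simp
  also have "\<dots> = tau powr p * (norm (v tau))\<^sup>2 / t powr p" by (simp add: powr_divide)
  also have "\<dots> \<le> (norm (v t))\<^sup>2" using hh t0 by (simp add: divide_le_eq mult.commute)
  finally have A: "(tau / t) * (norm (v tau))\<^sup>2 \<le> (norm (v t))\<^sup>2" .
  have "(cc * G * tau)\<^sup>2 \<le> (norm (v tau))\<^sup>2"
    using v_lower[of tau] tau_pos cc_pos G_pos by (intro power_mono) auto
  then have "(tau / t) * (cc * G * tau)\<^sup>2 \<le> (tau / t) * (norm (v tau))\<^sup>2"
    using t0 tau_pos by (intro mult_left_mono) auto
  also note A
  finally show ?thesis by (simp add: power_mult_distrib power3_eq_cube power2_eq_square mult_ac)
qed

lemma not_long: "\<not> (\<forall>t. 0 < t \<and> t \<le> Tstar \<longrightarrow> restart_fun x \<alpha> lam t > 0)"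
proof
  assume rf: "\<forall>t. 0 < t \<and> t \<le> Tstar \<longrightarrow> restart_fun x \<alpha> lam t > 0"
  define k where "k = \<beta> * \<mu> * cc\<^sup>2 * G\<^sup>2 * tau ^ 3"
  define F where "F t = W t + k * ln t" for t
  have "F Tstar \<le> F tau"
  proof (rule DERIV_nonpos_imp_decreasing_open[of tau Tstar F])
    show "tau \<le> Tstar" using Tstar_gt by simp
    fix t assume t: "tau < t" "t < Tstar"
    then have t0: "t > 0" using tau_pos by simp
    have dF: "(F has_real_derivative (- (\<alpha> / t) * (norm (v t))\<^sup>2 - \<beta> * (blinfun_apply (H (x t)) (v t) \<bullet> v t)) + k * (1 / t)) (at t)"
      unfolding F_def[abs_def] using Wd[OF t0] t0 by (auto intro!: derivative_eq_intros)
    have vl: "cc\<^sup>2 * G\<^sup>2 * tau ^ 3 / t \<le> (norm (v t))\<^sup>2" using v_far[OF rf, of t] t by simp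
    have "- (\<alpha> / t) * (norm (v t))\<^sup>2 - \<beta> * (blinfun_apply (H (x t)) (v t) \<bullet> v t) + k * (1 / t)
        \<le> - (\<beta> * \<mu>) * (norm (v t))\<^sup>2 + k * (1 / t)" using Wd_le[OF t0] by simp
    also have "\<dots> \<le> - (\<beta> * \<mu>) * (cc\<^sup>2 * G\<^sup>2 * tau ^ 3 / t) + k * (1 / t)"
    proof -
      have "\<beta> * \<mu> * (cc\<^sup>2 * G\<^sup>2 * tau ^ 3 / t) \<le> \<beta> * \<mu> * (norm (v t))\<^sup>2"
        by (rule mult_left_mono[OF vl]) (use beta_pos mu_pos in simp)
      then show ?thesis by simp
    qed
    also have "\<dots> = 0" by (simp add: k_def)
    finally show "\<exists>y. (F has_real_derivative y) (at t) \<and> y \<le> 0" using dF by blast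
  next
    show "continuous_on {tau..Tstar} F" unfolding F_def using tau_pos
      by (intro continuous_intros continuous_on_subset[OF Wc]) auto
  qed
  then have Fi: "W Tstar \<le> W tau - k * (ln Tstar - ln tau)" by (simp add: F_def algebra_simps)
  have kl: "k * (ln Tstar - ln tau) = G\<^sup>2 / \<mu>"
  proof -
    have "ln Tstar - ln tau = 1 / (\<beta> * \<mu>\<^sup>2 * cc\<^sup>2 * tau ^ 3)"
      using tau_pos by (simp add: Tstar_def ln_mult)
    moreover have "k * (1 / (\<beta> * \<mu>\<^sup>2 * cc\<^sup>2 * tau ^ 3)) = G\<^sup>2 / \<mu>"
      using beta_pos mu_pos cc_pos tau_pos by (simp add: k_def power2_eq_square field_simps)
    ultimately show ?thesis by simp
  qed
  have Wt: "W tau \<le> \<phi> z" using W_mono[of 0 tau] W0 tau_pos by simp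
  have WT: "W Tstar \<ge> \<phi> xstar"
  proof -
    have "0 \<le> 1/2 * (norm (v Tstar))\<^sup>2" by simp
    then show ?thesis using W_ge[of Tstar] by linarith
  qed
  have GG: "G\<^sup>2 / \<mu> \<ge> 2 * (\<phi> z - \<phi> xstar)" using G_sq mu_pos by (simp add: field_simps)
  from Fi kl have "W Tstar \<le> W tau - G\<^sup>2 / \<mu>" by simp
  with Wt have "W Tstar \<le> \<phi> z - G\<^sup>2 / \<mu>" by simp
  with GG have "W Tstar \<le> \<phi> z - 2 * (\<phi> z - \<phi> xstar)" by simp
  with WT D_pos show False by simp
qed

lemma seg:
  assumes nm: "\<not> (\<forall>y. \<phi> z \<le> \<phi> y)"
  shows "\<exists>T. restart_time \<phi> xs \<alpha> lam z = ereal T \<and> tau \<le> T \<and> T \<le> Tstar \<and> \<phi> (xs z T) - \<phi> xstar \<le> qq * (\<phi> z - \<phi> xstar)"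
proof -
  define S where "S = {t. t > 0 \<and> restart_fun (xs z) \<alpha> lam t \<le> 0}"
  have rt: "restart_time \<phi> xs \<alpha> lam z = Inf (ereal ` S)" unfolding restart_time_def S_def by (rule if_not_P[OF nm])
  obtain t0 where t0: "t0 \<in> S" "t0 \<le> Tstar" using not_long by (auto simp: S_def not_less)
  have Sb: "s > tau" if "s \<in> S" for s
  proof (rule ccontr)
    assume "\<not> s > tau"
    then have "restart_fun x \<alpha> lam s > 0" using rf_pos[of s] that by (auto simp: S_def)
    then show False using that by (simp add: S_def)
  qed
  define I where "I = Inf (ereal ` S)"
  have I1: "I \<le> ereal Tstar" unfolding I_def
    by (rule order_trans[OF INF_lower[OF t0(1)]]) (use t0 in simp)
  have I2: "ereal tau \<le> I" unfolding I_def by (rule INF_greatest) (use Sb in force)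
  obtain T where IT: "I = ereal T" using I1 I2 by (cases I) auto
  have T: "tau \<le> T" "T \<le> Tstar" using I1 I2 IT by auto
  have "\<phi> (x T) \<le> W T" unfolding W_def by simp
  also have "W T \<le> W tau" using W_mono[of tau T] T tau_pos by simp
  also note W_tau
  finally have f1: "\<phi> (x T) \<le> \<phi> z - \<beta> * \<mu> * cc\<^sup>2 * G\<^sup>2 * tau ^ 3 / 3" .
  define B where "B = \<beta> * \<mu> * cc\<^sup>2 * tau ^ 3 / 3"
  define D where "D = \<phi> z - \<phi> xstar"
  have f1': "\<phi> (x T) \<le> \<phi> z - B * G\<^sup>2" using f1 by (simp add: B_def mult_ac)
  have f2: "B * (2 * \<mu> * D) \<le> B * G\<^sup>2"
    using G_sq beta_pos mu_pos tau_pos by (intro mult_left_mono) (auto simp: B_def D_def)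
  have f3: "B * (2 * \<mu> * D) = q0 * D"
    by (simp add: q0_def B_def power2_eq_square)
  have f4: "(1 - q0) * D \<le> qq * D"
    using D_pos by (intro mult_right_mono) (auto simp: qq_def D_def)
  have f5: "(1 - q0) * D = D - q0 * D" by (simp add: algebra_simps)
  have "\<phi> (x T) - \<phi> xstar \<le> qq * (\<phi> z - \<phi> xstar)"
    using f1' f2 f3 f4 f5 unfolding D_def by linarith
  then show ?thesis using rt IT T unfolding I_def by auto
qed

end

context din begin

lemma seg_din:
  assumes nm: "\<not> (\<forall>y. \<phi> z \<le> \<phi> y)"
  shows "\<exists>T. restart_time \<phi> xs \<alpha> lam z = ereal T \<and> tau \<le> T \<and> T \<le> Tstar \<and> \<phi> (xs z T) - \<phi> xstar \<le> qq * (\<phi> z - \<phi> xstar)"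
proof -
  obtain v a where f: "xs z 0 = z"
    "\<And>t. t \<ge> 0 \<Longrightarrow> (xs z has_vector_derivative v t) (at t within {0..})"
    "continuous_on {0..} v" "v 0 = 0"
    "\<And>t. t > 0 \<Longrightarrow> (v has_vector_derivative a t) (at t)"
    "\<And>t. t > 0 \<Longrightarrow> a t = - (\<alpha> / t) *\<^sub>R v t - \<beta> *\<^sub>R blinfun_apply (H (xs z t)) (v t) - g (xs z t)"
    by (rule sol_facts[of z]) blast
  have dp: "\<phi> z > \<phi> xstar" using nonmin_pos[OF nm] by simp
  interpret T: trajn \<phi> g H xs \<mu> L \<alpha> \<beta> lam xstar z v a
    apply unfold_locales
    using f dp by auto
  show ?thesis using T.seg[OF nm] .
qed

lemma stay_din: "t \<ge> 0 \<Longrightarrow> \<phi> (xs z t) \<le> \<phi> z"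
proof -
  assume t: "t \<ge> 0"
  obtain v a where f: "xs z 0 = z"
    "\<And>t. t \<ge> 0 \<Longrightarrow> (xs z has_vector_derivative v t) (at t within {0..})"
    "continuous_on {0..} v" "v 0 = 0"
    "\<And>t. t > 0 \<Longrightarrow> (v has_vector_derivative a t) (at t)"
    "\<And>t. t > 0 \<Longrightarrow> a t = - (\<alpha> / t) *\<^sub>R v t - \<beta> *\<^sub>R blinfun_apply (H (xs z t)) (v t) - g (xs z t)"
    by (rule sol_facts[of z]) blast
  interpret T: traj \<phi> g H xs \<mu> L \<alpha> \<beta> lam xstar z v a
    apply unfold_locales
    using f by auto
  show ?thesis using T.phi_le[OF t] .
qed

lemma min_rt: "(\<forall>y. \<phi> z \<le> \<phi> y) \<Longrightarrow> restart_time \<phi> xs \<alpha> lam z = \<infinity>"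
  by (simp add: restart_time_def)

lemma rp_suc: "restart_point \<phi> xs \<alpha> lam z0 (Suc k) =
   (if restart_time \<phi> xs \<alpha> lam (restart_point \<phi> xs \<alpha> lam z0 k) = \<infinity> then restart_point \<phi> xs \<alpha> lam z0 k
    else xs (restart_point \<phi> xs \<alpha> lam z0 k) (real_of_ereal (restart_time \<phi> xs \<alpha> lam (restart_point \<phi> xs \<alpha> lam z0 k))))"
  by (simp add: restart_point_def Let_def split_def)

lemma rT_suc: "restart_T \<phi> xs \<alpha> lam z0 (Suc k) =
   restart_T \<phi> xs \<alpha> lam z0 k + restart_time \<phi> xs \<alpha> lam (restart_point \<phi> xs \<alpha> lam z0 k)"
  by (simp add: restart_T_def restart_point_def Let_def split_def)

lemma rT_0: "restart_T \<phi> xs \<alpha> lam z0 0 = 0" by (simp add: restart_T_def)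
lemma rp_0: "restart_point \<phi> xs \<alpha> lam z0 0 = z0" by (simp add: restart_point_def)

lemma ind_facts:
  "\<phi> (restart_point \<phi> xs \<alpha> lam z0 k) - \<phi> xstar \<le> qq ^ k * (\<phi> z0 - \<phi> xstar) \<and>
   (restart_T \<phi> xs \<alpha> lam z0 k = \<infinity> \<or>
    (\<exists>r. restart_T \<phi> xs \<alpha> lam z0 k = ereal r \<and> real k * tau \<le> r \<and> r \<le> real k * Tstar))"
proof (induction k)
  case 0
  then show ?case by (simp add: rT_0 rp_0)
next
  case (Suc k)
  define zk where "zk = restart_point \<phi> xs \<alpha> lam z0 k"
  define Tk where "Tk = restart_T \<phi> xs \<alpha> lam z0 k"
  have D0: "\<phi> z0 - \<phi> xstar \<ge> 0" using minimizer by simp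
  have IH1: "\<phi> zk - \<phi> xstar \<le> qq ^ k * (\<phi> z0 - \<phi> xstar)" using Suc.IH by (simp add: zk_def)
  have IH2: "Tk = \<infinity> \<or> (\<exists>r. Tk = ereal r \<and> real k * tau \<le> r \<and> r \<le> real k * Tstar)"
    using Suc.IH by (simp add: Tk_def)
  show ?case
  proof (cases "\<forall>y. \<phi> zk \<le> \<phi> y")
    case True
    then have rt: "restart_time \<phi> xs \<alpha> lam zk = \<infinity>" by (rule min_rt)
    have "restart_point \<phi> xs \<alpha> lam z0 (Suc k) = zk" using rt by (simp add: rp_suc zk_def[symmetric])
    moreover have "restart_T \<phi> xs \<alpha> lam z0 (Suc k) = \<infinity>"
    proof -
      have "restart_T \<phi> xs \<alpha> lam z0 (Suc k) = Tk + \<infinity>" using rt by (simp add: rT_suc zk_def[symmetric] Tk_def[symmetric])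
      also have "\<dots> = \<infinity>" using IH2 by auto
      finally show ?thesis .
    qed
    moreover have "\<phi> zk - \<phi> xstar \<le> qq ^ Suc k * (\<phi> z0 - \<phi> xstar)"
    proof -
      have "\<phi> zk \<le> \<phi> xstar" using True by simp
      moreover have "0 \<le> qq ^ Suc k * (\<phi> z0 - \<phi> xstar)" using qq_pos D0 by simp
      ultimately show ?thesis by linarith
    qed
    ultimately show ?thesis by simp
  next
    case False
    from seg_din[OF False] obtain T where T: "restart_time \<phi> xs \<alpha> lam zk = ereal T" "tau \<le> T" "T \<le> Tstar"
      "\<phi> (xs zk T) - \<phi> xstar \<le> qq * (\<phi> zk - \<phi> xstar)" by blast
    have rp: "restart_point \<phi> xs \<alpha> lam z0 (Suc k) = xs zk T" using T(1) by (simp add: rp_suc zk_def[symmetric])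
    have rT: "restart_T \<phi> xs \<alpha> lam z0 (Suc k) = Tk + ereal T" using T(1) by (simp add: rT_suc zk_def[symmetric] Tk_def[symmetric])
    have A: "\<phi> (xs zk T) - \<phi> xstar \<le> qq ^ Suc k * (\<phi> z0 - \<phi> xstar)"
    proof -
      have "qq * (\<phi> zk - \<phi> xstar) \<le> qq * (qq ^ k * (\<phi> z0 - \<phi> xstar))"
        using IH1 qq_pos by (intro mult_left_mono) auto
      then show ?thesis using T(4) by simp
    qed
    have B: "restart_T \<phi> xs \<alpha> lam z0 (Suc k) = \<infinity> \<or>
      (\<exists>r. restart_T \<phi> xs \<alpha> lam z0 (Suc k) = ereal r \<and> real (Suc k) * tau \<le> r \<and> r \<le> real (Suc k) * Tstar)"
      using IH2
    proof
      assume "Tk = \<infinity>" then show ?thesis using rT by simp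
    next
      assume "\<exists>r. Tk = ereal r \<and> real k * tau \<le> r \<and> r \<le> real k * Tstar"
      then obtain r where r: "Tk = ereal r" "real k * tau \<le> r" "r \<le> real k * Tstar" by blast
      then show ?thesis using rT T by (auto simp: algebra_simps)
    qed
    show ?thesis using A B rp by simp
  qed
qed

end

context din begin

lemma Tstar_pos: "Tstar > 0" using Tstar_gt tau_pos by simp

lemma final: "\<exists>C \<kappa>. C \<ge> 0 \<and> \<kappa> > 0 \<and>
           (\<forall>z0. (\<forall>t\<ge>0. \<exists>k. ereal t < restart_T \<phi> xs \<alpha> lam z0 k) \<and>
                 (\<forall>t>0. \<phi> (restarted_traj \<phi> xs \<alpha> lam z0 t) - \<phi> xstar
                        \<le> C * exp (- \<kappa> * t) * (\<phi> z0 - \<phi> xstar)))"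
proof -
  have C: "0 \<le> 1 / qq" using qq_pos by simp
  have lnq: "ln qq < 0" using qq_pos qq_lt1 by simp
  have K: "0 < - ln qq / Tstar" using lnq Tstar_pos by (simp add: divide_neg_pos)
  have main: "(\<forall>t\<ge>0. \<exists>k. ereal t < restart_T \<phi> xs \<alpha> lam z0 k) \<and>
                 (\<forall>t>0. \<phi> (restarted_traj \<phi> xs \<alpha> lam z0 t) - \<phi> xstar
                        \<le> 1 / qq * exp (- (- ln qq / Tstar) * t) * (\<phi> z0 - \<phi> xstar))" for z0
  proof (intro conjI allI impI)
  let ?RT = "restart_T \<phi> xs \<alpha> lam z0"
  let ?RP = "restart_point \<phi> xs \<alpha> lam z0"
  have D0: "\<phi> z0 - \<phi> xstar \<ge> 0" using minimizer by simp
  have ex: "\<exists>k. ereal t < ?RT k" if t: "t \<ge> 0" for t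
  proof (cases "\<exists>k. ?RT k = \<infinity>")
    case True
    then obtain k where "?RT k = \<infinity>" by blast
    then show ?thesis by (intro exI[of _ k]) simp
  next
    case False
    obtain n where n: "t < real n * tau" using ex_less_of_nat_mult[OF tau_pos] by blast
    from ind_facts[of z0 n] False obtain r where r: "?RT n = ereal r" "real n * tau \<le> r" by blast
    then show ?thesis using n by (intro exI[of _ n]) auto
  qed
  show "\<exists>k. ereal t < ?RT k" if "t \<ge> 0" for t using ex that by blast
  fix t :: real assume t: "t > 0"
  obtain k0 where k0: "ereal t < ?RT k0" using ex[of t] t by auto
  have "k0 \<noteq> 0"
  proof
    assume "k0 = 0"
    then show False using k0 t by (simp add: rT_0)
  qed
  then obtain j where j: "k0 = Suc j" by (cases k0) auto
  define k where "k = (LEAST k. ereal t < ?RT (Suc k))"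
  have kS: "ereal t < ?RT (Suc k)" unfolding k_def by (rule LeastI[of _ j]) (use k0 j in simp)
  have kle: "?RT k \<le> ereal t"
  proof (cases k)
    case 0 then show ?thesis using t by (simp add: rT_0)
  next
    case (Suc i)
    have "i < k" using Suc by simp
    then have "\<not> ereal t < ?RT (Suc i)" unfolding k_def by (rule not_less_Least)
    then show ?thesis using Suc by simp
  qed
  from ind_facts[of z0 k] have I1: "\<phi> (?RP k) - \<phi> xstar \<le> qq ^ k * (\<phi> z0 - \<phi> xstar)"
    and I2: "?RT k = \<infinity> \<or> (\<exists>r. ?RT k = ereal r \<and> real k * tau \<le> r \<and> r \<le> real k * Tstar)" by auto
  obtain r where r: "?RT k = ereal r" "r \<le> t" using I2 kle by auto
  have traj: "restarted_traj \<phi> xs \<alpha> lam z0 t = xs (?RP k) (t - r)"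
    unfolding restarted_traj_def Let_def k_def[symmetric] using r by simp
  have stay: "\<phi> (xs (?RP k) (t - r)) \<le> \<phi> (?RP k)" using r by (intro stay_din) simp
  have rhs_nn: "0 \<le> 1 / qq * exp (- (- ln qq / Tstar) * t) * (\<phi> z0 - \<phi> xstar)"
    using qq_pos D0 by simp
  show "\<phi> (restarted_traj \<phi> xs \<alpha> lam z0 t) - \<phi> xstar \<le> 1 / qq * exp (- (- ln qq / Tstar) * t) * (\<phi> z0 - \<phi> xstar)"
  proof (cases "\<forall>y. \<phi> (?RP k) \<le> \<phi> y")
    case True
    then have "\<phi> (?RP k) \<le> \<phi> xstar" by simp
    then show ?thesis using traj stay rhs_nn by simp
  next
    case False
    from seg_din[OF False] obtain T where T: "restart_time \<phi> xs \<alpha> lam (?RP k) = ereal T" by blast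
    have "?RT (Suc k) = ereal (r + T)" using T r by (simp add: rT_suc)
    moreover from ind_facts[of z0 "Suc k"]
    have "?RT (Suc k) = \<infinity> \<or> (\<exists>r. ?RT (Suc k) = ereal r \<and> real (Suc k) * tau \<le> r \<and> r \<le> real (Suc k) * Tstar)" by auto
    ultimately have "r + T \<le> real (Suc k) * Tstar" by auto
    moreover have "t < r + T" using kS \<open>?RT (Suc k) = ereal (r + T)\<close> by simp
    ultimately have tk: "t / Tstar \<le> real (Suc k)" using Tstar_pos by (simp add: divide_le_eq)
    have "qq ^ Suc k = qq powr (real (Suc k))" using qq_pos by (rule powr_realpow[symmetric])
    also have "\<dots> = exp (real (Suc k) * ln qq)" using qq_pos unfolding powr_def by simp
    also have "\<dots> \<le> exp (t / Tstar * ln qq)"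
    proof -
      have "real (Suc k) * ln qq \<le> t / Tstar * ln qq" using mult_right_mono_neg[OF tk, of "ln qq"] lnq by simp
      then show ?thesis by simp
    qed
    finally have "qq * qq ^ k \<le> exp (t / Tstar * ln qq)" by simp
    then have qk: "qq ^ k \<le> 1 / qq * exp (- (- ln qq / Tstar) * t)" using qq_pos
      by (simp add: field_simps mult.commute)
    have "\<phi> (restarted_traj \<phi> xs \<alpha> lam z0 t) - \<phi> xstar \<le> qq ^ k * (\<phi> z0 - \<phi> xstar)"
      using traj stay I1 by simp
    also have "\<dots> \<le> 1 / qq * exp (- (- ln qq / Tstar) * t) * (\<phi> z0 - \<phi> xstar)"
      using qk D0 by (intro mult_right_mono) auto
    finally show ?thesis .
  qed
  qed
  show ?thesis using C K main by blast
qed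

end

theorem mainTheorem1:
  fixes \<phi> :: "'a::euclidean_space \<Rightarrow> real"
    and g :: "'a \<Rightarrow> 'a"
    and H :: "'a \<Rightarrow> 'a \<Rightarrow>\<^sub>L 'a"
    and xs :: "'a \<Rightarrow> real \<Rightarrow> 'a"
    and \<mu> L \<alpha> \<beta> lam :: real and xstar :: 'a
  assumes grad: "\<And>x. (\<phi> has_derivative (\<lambda>h. g x \<bullet> h)) (at x)"
    and hess: "\<And>x. (g has_derivative blinfun_apply (H x)) (at x)"
    and hess_cont: "continuous_on UNIV H"
    and mu_pos: "\<mu> > 0"
    and strongly_convex: "strongly_convex_on \<mu> UNIV \<phi>"
    and minimizer: "\<And>x. \<phi> xstar \<le> \<phi> x"
    and lipschitz: "L-lipschitz_on UNIV g"
    and alpha_pos: "\<alpha> > 0" and beta_pos: "\<beta> > 0"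
    and lambda_range: "0 \<le> lam" "lam \<le> 1" "lam \<le> 1 / (2 * \<alpha>)"
    and sol: "\<And>z. DIN_sol \<alpha> \<beta> g H z (xs z)"
  shows "\<exists>C \<kappa>. C \<ge> 0 \<and> \<kappa> > 0 \<and>
           (\<forall>z0. (\<forall>t\<ge>0. \<exists>k. ereal t < restart_T \<phi> xs \<alpha> lam z0 k) \<and>
                 (\<forall>t>0. \<phi> (restarted_traj \<phi> xs \<alpha> lam z0 t) - \<phi> xstar
                        \<le> C * exp (- \<kappa> * t) * (\<phi> z0 - \<phi> xstar)))"
proof -
  interpret din \<phi> g H xs \<mu> L \<alpha> \<beta> lam xstar
    by (unfold_locales) (use assms in auto)
  show ?thesis by (rule final)
qed

end
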